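(* The minimal Dress ring $D$ of $\mathbb{R}(X)$ is a Dedekind domain.
   Context: $D$ denotes the minimal Dress ring of the field $\mathbb{R}(X)$, i.e. the subring of $\mathbb{R}(X)$ generated by $\mathbb{Z}$ and all elements $1/(1+h^2)$ with $h\in\mathbb{R}(X)$. *)

theory Defs
  imports "HOL-Algebra.Ring_Divisibility" "HOL-Computational_Algebra.Fraction_Field"
    "HOL-Computational_Algebra.Polynomial"
begin

text \<open>The rational function field R(X) is the type real poly fract.\<close>

definition is_subring :: "'a::field set \<Rightarrow> bool" where
  "is_subring S \<longleftrightarrow> 0 \<in> S \<and> 1 \<in> S \<and> (\<forall>a\<in>S. \<forall>b\<in>S. a + b \<in> S \<and> a - b \<in> S \<and> a * b \<in> S)"

definition minimal_Dress_ring :: "real poly fract set" where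
  "minimal_Dress_ring =
     \<Inter>{S. is_subring S \<and> (\<forall>h::real poly fract. 1 / (1 + h^2) \<in> S)}"

definition sub_ring_struct :: "'a::field set \<Rightarrow> 'a ring" where
  "sub_ring_struct S = \<lparr>carrier = S, monoid.mult = (*), one = 1, ring.zero = 0, add = (+)\<rparr>"

definition integral_over :: "'a::field set \<Rightarrow> 'a \<Rightarrow> bool" where
  "integral_over S x \<longleftrightarrow>
     (\<exists>p::'a poly. degree p \<ge> 1 \<and> lead_coeff p = 1 \<and> (\<forall>i. coeff p i \<in> S) \<and> poly p x = 0)"

definition frac_field_in :: "'a::field set \<Rightarrow> 'a set" where
  "frac_field_in S = {a / b | a b. a \<in> S \<and> b \<in> S \<and> b \<noteq> 0}"

definition integrally_closed_sub :: "'a::field set \<Rightarrow> bool" where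
  "integrally_closed_sub S \<longleftrightarrow> (\<forall>x\<in>frac_field_in S. integral_over S x \<longrightarrow> x \<in> S)"

definition Dedekind_subring :: "'a::field set \<Rightarrow> bool" where
  "Dedekind_subring S \<longleftrightarrow>
     noetherian_domain (sub_ring_struct S) \<and>
     integrally_closed_sub S \<and>
     (\<forall>P. primeideal P (sub_ring_struct S) \<and> P \<noteq> {0} \<longrightarrow> maximalideal P (sub_ring_struct S))"

end

theory Submission
  imports Defs "HOL-Computational_Algebra.Computational_Algebra" "HOL-Computational_Algebra.Field_as_Ring"
begin


abbreviation DD :: "real poly fract set" where "DD \<equiv> minimal_Dress_ring"

lemma D_subring: "is_subring DD"
  unfolding minimal_Dress_ring_def is_subring_def by auto

lemma D_gen: "1 / (1 + h^2) \<in> DD"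
  unfolding minimal_Dress_ring_def by auto

lemma D_min: "is_subring S \<Longrightarrow> (\<And>h. 1 / (1 + h^2) \<in> S) \<Longrightarrow> DD \<subseteq> S"
  unfolding minimal_Dress_ring_def by auto

lemma D_0: "0 \<in> DD" and D_1: "1 \<in> DD"
  using D_subring unfolding is_subring_def by auto

lemma D_add: "a \<in> DD \<Longrightarrow> b \<in> DD \<Longrightarrow> a + b \<in> DD"
  and D_diff: "a \<in> DD \<Longrightarrow> b \<in> DD \<Longrightarrow> a - b \<in> DD"
  and D_mult: "a \<in> DD \<Longrightarrow> b \<in> DD \<Longrightarrow> a * b \<in> DD"
  using D_subring unfolding is_subring_def by auto

lemma D_uminus: "a \<in> DD \<Longrightarrow> - a \<in> DD"
  using D_diff[OF D_0] by simp

lemma D_power: "a \<in> DD \<Longrightarrow> a ^ n \<in> DD"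
  by (induction n) (auto intro: D_mult D_1)

lemma D_sum: "(\<And>i. i \<in> I \<Longrightarrow> f i \<in> DD) \<Longrightarrow> sum f I \<in> DD"
  by (induction I rule: infinite_finite_induct) (auto intro: D_add D_0)

lemma D_of_nat: "of_nat n \<in> DD"
  by (induction n) (auto intro: D_add D_0 D_1)

lemma D_of_int: "of_int k \<in> DD"
proof (cases "k \<ge> 0")
  case True then show ?thesis using D_of_nat[of "nat k"] by simp
next
  case False then show ?thesis using D_uminus[OF D_of_nat[of "nat (-k)"]] by simp
qed

definition ev :: "real poly \<Rightarrow> real poly fract" where "ev p = Fract p 1"
definition CC :: "real \<Rightarrow> real poly fract" where "CC c = ev [:c:]"
definition TT :: "real poly fract" where "TT = ev [:0,1:]"

lemma ev_add: "ev (p + q) = ev p + ev q" by (simp add: ev_def)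
lemma ev_mult: "ev (p * q) = ev p * ev q" by (simp add: ev_def)
lemma ev_diff: "ev (p - q) = ev p - ev q" by (simp add: ev_def)
lemma ev_uminus: "ev (- p) = - ev p" by (simp add: ev_def)
lemma ev_0: "ev 0 = 0" by (simp add: ev_def Zero_fract_def)
lemma ev_1: "ev 1 = 1" by (simp add: ev_def One_fract_def)
lemma ev_power: "ev (p ^ n) = ev p ^ n"
  by (induction n) (auto simp: ev_1 ev_mult)
lemma ev_eq_iff: "ev p = ev q \<longleftrightarrow> p = q" by (simp add: ev_def eq_fract)
lemma ev_eq_0_iff: "ev p = 0 \<longleftrightarrow> p = 0" using ev_eq_iff[of p 0] by (simp add: ev_0)
lemma Fract_ev: "q \<noteq> 0 \<Longrightarrow> Fract p q = ev p / ev q" by (simp add: ev_def)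
lemma ev_sum: "ev (sum f I) = (\<Sum>i\<in>I. ev (f i))"
  by (induction I rule: infinite_finite_induct) (auto simp: ev_0 ev_add)

lemma CC_add: "CC (a + b) = CC a + CC b" by (simp add: CC_def ev_add[symmetric])
lemma CC_mult: "CC (a * b) = CC a * CC b" by (simp add: CC_def ev_mult[symmetric] mult.commute)
lemma CC_diff: "CC (a - b) = CC a - CC b" by (simp add: CC_def ev_diff[symmetric])
lemma CC_0: "CC 0 = 0" by (simp add: CC_def ev_0[symmetric])
lemma CC_1: "CC 1 = 1" by (simp add: CC_def ev_1[symmetric] one_pCons)
lemma CC_eq_0_iff: "CC a = 0 \<longleftrightarrow> a = 0" by (simp add: CC_def ev_eq_0_iff)
lemma CC_power: "CC (a ^ n) = CC a ^ n"
  by (induction n) (auto simp: CC_1 CC_mult)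
lemma CC_divide: "CC (a / b) = CC a / CC b"
proof (cases "b = 0")
  case True then show ?thesis by (simp add: CC_0)
next
  case False
  have "CC (a / b) * CC b = CC a" by (simp add: CC_mult[symmetric] False)
  moreover have "CC b \<noteq> 0" using False CC_eq_0_iff by auto
  ultimately show ?thesis by (simp add: field_simps)
qed
lemma CC_of_int: "CC (of_int k) = of_int k"
proof -
  have "CC (of_nat n) = of_nat n" for n
    by (induction n) (auto simp: CC_0 CC_1 CC_add)
  then show ?thesis
    apply (cases k rule: int_cases)
    apply (simp)
    apply (metis CC_0 CC_diff diff_0 of_int_minus of_int_of_nat_eq)
    done
qed

lemma CC_in_D: "CC c \<in> DD"
proof -
  define k where "k = \<lfloor>c\<rfloor>"
  define t where "t = 1 - (c - of_int k)"
  have t0: "0 < t" "t \<le> 1" unfolding t_def k_def by linarith+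
  define h where "h = sqrt (1 / t - 1)"
  have "1 / t - 1 \<ge> 0" using t0 by (simp add: field_simps)
  hence "h^2 = 1/t - 1" unfolding h_def by simp
  hence "1 + h^2 = 1/t" by simp
  hence t_eq: "t = 1 / (1 + h^2)" using t0 by simp
  have "CC t = 1 / (1 + (CC h)^2)"
    by (simp add: t_eq CC_divide CC_add CC_1 CC_power)
  hence "CC t \<in> DD" using D_gen by simp
  moreover have "c = of_int (k + 1) - t" unfolding t_def by simp
  ultimately show ?thesis
    by (metis CC_diff CC_of_int D_diff D_of_int)
qed




lemma map_poly_hom_add:
  fixes f :: "'a::comm_ring_1 \<Rightarrow> 'b::comm_ring_1"
  assumes f0: "f 0 = 0" and fadd: "\<And>x y. f (x+y) = f x + f y"
  shows "map_poly f (p + q) = map_poly f p + map_poly f q"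
  by (intro poly_eqI) (simp add: coeff_map_poly f0 fadd)

lemma poly_map_poly_hom_mult:
  fixes f :: "'a::comm_ring_1 \<Rightarrow> 'b::comm_ring_1"
  assumes f0: "f 0 = 0" and fadd: "\<And>x y. f (x+y) = f x + f y" and fmult: "\<And>x y. f (x*y) = f x * f y"
  shows "poly (map_poly f (p * q)) y = poly (map_poly f p) y * poly (map_poly f q) y"
proof (induction p)
  case 0 then show ?case by (simp add: f0)
next
  case (pCons a p)
  have "pCons a p * q = smult a q + pCons 0 (p * q)" by (rule mult_pCons_left)
  then have "poly (map_poly f (pCons a p * q)) y
      = poly (map_poly f (smult a q)) y + poly (map_poly f (pCons 0 (p * q))) y"
    by (simp add: map_poly_hom_add[OF f0 fadd])
  also have "\<dots> = f a * poly (map_poly f q) y + y * poly (map_poly f (p * q)) y"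
    by (simp add: map_poly_smult[OF f0 fmult] map_poly_pCons[of f, OF f0] f0)
  also have "\<dots> = poly (map_poly f (pCons a p)) y * poly (map_poly f q) y"
    using pCons by (simp add: map_poly_pCons[of f, OF f0] algebra_simps)
  finally show ?case .
qed

lemma poly_map_poly_hom_add:
  fixes f :: "'a::comm_ring_1 \<Rightarrow> 'b::comm_ring_1"
  assumes f0: "f 0 = 0" and fadd: "\<And>x y. f (x+y) = f x + f y"
  shows "poly (map_poly f (p + q)) y = poly (map_poly f p) y + poly (map_poly f q) y"
  by (simp add: map_poly_hom_add[OF f0 fadd])

lemma poly_map_poly_hom_eval:
  fixes f :: "'a::comm_ring_1 \<Rightarrow> 'b::comm_ring_1"
  assumes f0: "f 0 = 0" and fadd: "\<And>x y. f (x+y) = f x + f y" and fmult: "\<And>x y. f (x*y) = f x * f y"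
  shows "poly (map_poly f p) (f x) = f (poly p x)"
  by (induction p) (simp_all add: f0 map_poly_pCons[of f, OF f0] fadd fmult)

lemma quad_factor:
  fixes q :: "real poly"
  assumes dq: "degree q \<ge> 1" and nr: "\<forall>x. poly q x \<noteq> 0"
  shows "\<exists>a b r. b \<noteq> 0 \<and> q = [:a^2+b^2, -2*a, 1:] * r"
proof -
  define Q where "Q = map_poly complex_of_real q"
  have degQ: "degree Q = degree q" unfolding Q_def by (rule degree_map_poly) simp
  have "\<not> (\<exists>a l. a \<noteq> 0 \<and> l = 0 \<and> Q = pCons a l)"
  proof
    assume "\<exists>a l. a \<noteq> 0 \<and> l = 0 \<and> Q = pCons a l"
    then have "degree Q = 0" by auto
    with degQ dq show False by simp
  qed
  from fundamental_theorem_of_algebra_alt[OF this] obtain z where z: "poly Q z = 0" by blast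
  define a where "a = Re z"
  define b where "b = Im z"
  have ev_real: "poly Q (complex_of_real x) = complex_of_real (poly q x)" for x
    unfolding Q_def by (rule poly_map_poly_hom_eval) auto
  have b0: "b \<noteq> 0"
  proof
    assume "b = 0"
    then have "z = complex_of_real a" unfolding a_def b_def by (simp add: complex_eq_iff)
    with z ev_real nr show False by auto
  qed
  define g where "g = [:a^2+b^2, -2*a, 1:]"
  have g0: "g \<noteq> 0" unfolding g_def by simp
  have dg: "degree g = 2" unfolding g_def by simp
  have Eg: "poly (map_poly complex_of_real g) z = 0"
    unfolding g_def a_def b_def
    by (simp add: map_poly_pCons complex_eq_iff power2_eq_square algebra_simps)
  define rem where "rem = q mod g"
  have "rem = 0 \<or> degree rem < 2" unfolding rem_def using degree_mod_less[OF g0] dg by simp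
  then have dr: "degree rem \<le> 1" by auto
  have rem_eq: "rem = [:coeff rem 0, coeff rem 1:]"
  proof (rule poly_eqI)
    fix n show "coeff rem n = coeff [:coeff rem 0, coeff rem 1:] n"
      using dr coeff_eq_0[of rem n] by (cases n; cases "n - 1"; auto simp: coeff_pCons)
  qed
  have qeq: "q = g * (q div g) + rem" unfolding rem_def by (simp add: mult.commute)
  have "poly Q z = poly (map_poly complex_of_real g) z * poly (map_poly complex_of_real (q div g)) z
        + poly (map_poly complex_of_real rem) z"
    unfolding Q_def
    by (subst qeq, subst poly_map_poly_hom_add, simp, simp, subst poly_map_poly_hom_mult) auto
  with z Eg have "poly (map_poly complex_of_real rem) z = 0" by simp
  then have "poly (map_poly complex_of_real [:coeff rem 0, coeff rem 1:]) z = 0"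
    using rem_eq by metis
  then have "complex_of_real (coeff rem 0) + z * complex_of_real (coeff rem 1) = 0"
    by (simp add: map_poly_pCons)
  then have "coeff rem 0 + Re z * coeff rem 1 = 0" "Im z * coeff rem 1 = 0"
    by (simp_all add: complex_eq_iff)
  with b0 have "coeff rem 1 = 0" "coeff rem 0 = 0" unfolding b_def by auto
  then have "rem = 0" using rem_eq by simp
  with qeq have "q = g * (q div g)" by simp
  with b0 show ?thesis unfolding g_def by blast
qed




lemma ev_const: "ev [:c:] = CC c" by (simp add: CC_def)

lemma two_ne0: "(2::real poly fract) \<noteq> 0"
proof -
  have "(2::real poly fract) = CC 2" by (metis CC_of_int of_int_numeral)
  then show ?thesis by (simp add: CC_eq_0_iff)
qed

lemma ev_quad: "ev [:a^2+b^2, -2*a, 1:] = (TT - CC a)^2 + CC b ^2"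
proof -
  have "ev [:a^2+b^2, -2*a, 1:] = ev (([:0,1:] - [:a:])^2 + [:b:]^2)"
    by (simp add: power2_eq_square algebra_simps)
  also have "\<dots> = (TT - CC a)^2 + CC b ^2"
    by (simp only: ev_add ev_diff ev_power TT_def ev_const)
  finally show ?thesis .
qed

lemma quad_in_D:
  assumes b0: "b \<noteq> 0" and j: "j \<le> 2"
  shows "TT ^ j / ev [:a^2+b^2, -2*a, 1:] \<in> DD"
proof -
  define G where "G = ev [:a^2+b^2, -2*a, 1:]"
  have G0: "G \<noteq> 0" unfolding G_def ev_eq_0_iff by simp
  have Geq: "G = (TT - CC a)^2 + CC b ^2" unfolding G_def by (rule ev_quad)
  have cb: "CC b \<noteq> 0" using b0 CC_eq_0_iff by auto
  define s where "s = (TT - CC a) / CC b"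
  have s1: "1 + s^2 = G / CC b ^ 2" unfolding s_def Geq using cb
    by (simp add: field_simps)
  have s10: "1 + s^2 \<noteq> 0" using s1 G0 cb by simp
  have "1 + s = ev [:b - a, 1:] / CC b"
  proof -
    have "ev [:b - a, 1:] = CC b + TT - CC a"
    proof -
      have "ev [:b - a, 1:] = ev ([:b:] + [:0,1:] - [:a:])" by simp
      also have "\<dots> = CC b + TT - CC a" by (simp only: ev_add ev_diff TT_def ev_const)
      finally show ?thesis .
    qed
    then show ?thesis unfolding s_def using cb by (simp add: field_simps)
  qed
  then have sp0: "1 + s \<noteq> 0" using cb by (simp add: ev_eq_0_iff)
  have e1: "1 / (1 + s^2) = CC (b^2) / G" using s1 cb G0 by (simp add: CC_power)
  have invG: "1 / G \<in> DD"
  proof -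
    have "1 / G = CC (1 / b^2) * (1 / (1 + s^2))" using e1 cb b0
      by (simp add: CC_divide CC_power CC_1 field_simps)
    then show ?thesis using D_mult[OF CC_in_D D_gen] by simp
  qed
  define h where "h = (1 - s) / (1 + s)"
  have "1 / (1 + h^2) = 1/2 + s / (1 + s^2)"
  proof -
    have q0: "(1+s)^2 \<noteq> 0" using sp0 by simp
    have hsq: "h^2 = (1-s)^2/(1+s)^2" unfolding h_def by (simp add: power_divide)
    have "1 + h^2 = ((1+s)^2 + (1-s)^2)/(1+s)^2" using q0 by (simp add: hsq add_divide_distrib)
    also have "(1+s)^2 + (1-s)^2 = 2 * (1 + s^2)" by (simp add: power2_eq_square algebra_simps)
    finally have "1 + h^2 = 2 * (1 + s^2) / (1 + s)^2" .
    then show ?thesis using sp0 s10 two_ne0 by (simp add: field_simps power2_eq_square)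
  qed
  then have "s / (1 + s^2) = 1 / (1 + h^2) - CC (1/2)"
    by (simp add: CC_divide CC_1 two_ne0) (metis CC_of_int of_int_numeral add_diff_cancel_left')
  then have sD: "s / (1 + s^2) \<in> DD" using D_diff[OF D_gen CC_in_D] by simp
  have "(TT - CC a) / G = CC (1/b) * (s / (1 + s^2))"
    unfolding s1 unfolding s_def using cb G0 b0 by (simp add: CC_divide CC_1 field_simps power2_eq_square)
  then have tA: "(TT - CC a) / G \<in> DD" using D_mult[OF CC_in_D sD] by simp
  have t1: "TT / G \<in> DD"
  proof -
    have "TT / G = (TT - CC a) / G + CC a * (1 / G)" by (simp add: diff_divide_distrib)
    then show ?thesis using D_add[OF tA D_mult[OF CC_in_D invG]] by simp
  qed
  have t2: "TT^2 / G \<in> DD"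
  proof -
    have "TT^2 / G = 1 - CC (a^2 + b^2) * (1 / G) + CC (2*a) * (TT / G)"
    proof -
    have c2: "CC (2*a) = 2 * CC a" by (metis CC_mult CC_of_int of_int_numeral)
    have "TT^2 = G - CC (a^2 + b^2) + CC (2*a) * TT"
      unfolding Geq c2 by (simp add: CC_add CC_mult power2_eq_square algebra_simps)
    then have "TT^2 / G = G / G - CC (a^2 + b^2) / G + CC (2*a) * TT / G"
      by (simp add: diff_divide_distrib add_divide_distrib)
    then show "TT^2 / G = 1 - CC (a^2 + b^2) * (1 / G) + CC (2*a) * (TT / G)"
      using G0 by simp
    qed
    then show ?thesis
      by (metis D_1 D_add D_diff D_mult CC_in_D invG t1)
  qed
  from j have "j = 0 \<or> j = 1 \<or> j = 2" by auto
  then show ?thesis using invG t1 t2 unfolding G_def by auto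
qed




lemma nr_nz: "\<forall>x. poly (q::real poly) x \<noteq> 0 \<Longrightarrow> q \<noteq> 0" by auto

lemma frac_in_D:
  fixes q :: "real poly"
  assumes "\<forall>x. poly q x \<noteq> 0" "j \<le> degree q"
  shows "TT ^ j / ev q \<in> DD"
  using assms
proof (induction "degree q" arbitrary: q j rule: less_induct)
  case less
  show ?case
  proof (cases "degree q = 0")
    case True
    then obtain c where qc: "q = [:c:]" by (metis degree_eq_zeroE)
    with less.prems have "c \<noteq> 0" by auto
    from True less.prems have "j = 0" by simp
    then have "TT ^ j / ev q = CC (1 / c)" by (simp add: qc ev_const CC_divide CC_1)
    then show ?thesis using CC_in_D by simp
  next
    case False
    then obtain a b r where b0: "b \<noteq> 0" and qeq: "q = [:a^2+b^2, -2*a, 1:] * r"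
      using quad_factor less.prems by (metis le_less_linear less_one)
    define g where "g = [:a^2+b^2, -2*a, 1:]"
    have q0: "q \<noteq> 0" using less.prems nr_nz by blast
    have g0: "g \<noteq> 0" and r0: "r \<noteq> 0" using q0 qeq unfolding g_def by auto
    have dg: "degree g = 2" unfolding g_def by simp
    have dq: "degree q = 2 + degree r" using qeq degree_mult_eq[OF g0 r0] dg unfolding g_def by simp
    have rnr: "\<forall>x. poly r x \<noteq> 0" using less.prems(1) unfolding qeq by (metis poly_mult mult_zero_right)
    define j1 where "j1 = min j 2"
    define j2 where "j2 = j - j1"
    have j2r: "j2 \<le> degree r" using less.prems dq unfolding j1_def j2_def by auto
    have "TT ^ j2 / ev r \<in> DD" using less.hyps[OF _ rnr j2r] dq by simp
    moreover have "TT ^ j1 / ev g \<in> DD" unfolding g_def by (rule quad_in_D[OF b0]) (simp add: j1_def)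
    moreover have "TT ^ j / ev q = (TT ^ j1 / ev g) * (TT ^ j2 / ev r)"
      unfolding qeq g_def[symmetric] ev_mult j2_def j1_def
      by (simp add: power_add[symmetric])
    ultimately show ?thesis using D_mult by (metis times_divide_times_eq)
  qed
qed

definition AA :: "real poly fract set" where
  "AA = {ev p / ev q | p q. \<forall>x. poly q x \<noteq> 0}"

definition uu :: "real poly fract" where "uu = 1 / (1 + TT^2)"

lemma uu_D: "uu \<in> DD" unfolding uu_def by (rule D_gen)

lemma ev_uu: "1 + TT^2 = ev [:1,0,1:]"
proof -
  have "ev [:1,0,1:] = ev (1 + [:0,1:]^2)" by (simp add: power2_eq_square one_pCons)
  also have "\<dots> = 1 + TT^2" by (simp only: ev_add ev_1 ev_power TT_def)
  finally show ?thesis by simp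
qed

lemma ev_expand: "ev p = poly (map_poly CC p) TT"
proof (induction p)
  case 0 then show ?case by (simp add: ev_0)
next
  case (pCons a p)
  have "ev (pCons a p) = ev ([:a:] + [:0,1:] * p)" by simp
  also have "\<dots> = CC a + TT * ev p" by (simp only: ev_add ev_mult ev_const TT_def)
  finally show ?case using pCons by (simp add: map_poly_pCons CC_0)
qed

lemma ev_sum_expand: "ev p = (\<Sum>i\<le>degree p. CC (coeff p i) * TT ^ i)"
proof -
  have dm: "degree (map_poly CC p) = degree p" by (rule degree_map_poly) (simp add: CC_eq_0_iff)
  show ?thesis unfolding ev_expand poly_altdef dm by (simp add: coeff_map_poly CC_0)
qed

lemma AA_to_D: "x \<in> AA \<Longrightarrow> \<exists>n. uu ^ n * x \<in> DD"
proof -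
  assume "x \<in> AA"
  then obtain p q where x: "x = ev p / ev q" and nr: "\<forall>x. poly q x \<noteq> 0" unfolding AA_def by blast
  define n where "n = degree p"
  define q' where "q' = q * [:1,0,1:] ^ n"
  have nr': "\<forall>x. poly q' x \<noteq> 0" unfolding q'_def
  proof
    fix y
    have "poly [:1,0,1:] y = 1 + y*(y::real)" by simp
    moreover have "1 + y*y > 0" by (simp add: add_pos_nonneg)
    ultimately have "poly ([:1,0,1:]^n) y \<noteq> 0" by (simp add: poly_power)
    with nr show "poly (q * [:1,0,1:]^n) y \<noteq> 0" by simp
  qed
  have q0: "q \<noteq> 0" using nr by auto
  have "degree q' = degree q + degree ([:1,0,1:]^n :: real poly)" unfolding q'_def
    by (rule degree_mult_eq[OF q0]) simp
  also have "degree ([:1,0,1:]^n :: real poly) = 2 * n" by (simp add: degree_power_eq)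
  finally have dq': "degree p \<le> degree q'" unfolding n_def by simp
  have "uu ^ n * x = ev p / ev q'"
    unfolding x uu_def q'_def ev_mult ev_power ev_uu[symmetric] by (simp add: power_one_over field_simps)
  also have "\<dots> = (\<Sum>i\<le>degree p. CC (coeff p i) * (TT ^ i / ev q'))"
    by (subst ev_sum_expand) (simp add: sum_divide_distrib)
  also have "\<dots> \<in> DD"
    by (rule D_sum, rule D_mult[OF CC_in_D], rule frac_in_D[OF nr']) (use dq' in auto)
  finally show ?thesis by blast
qed

lemma AA_intro: "\<forall>x. poly q x \<noteq> 0 \<Longrightarrow> ev p / ev q \<in> AA" unfolding AA_def by blast

lemma nr_mult: assumes "\<forall>x. poly (q::real poly) x \<noteq> 0" "\<forall>x. poly q' x \<noteq> 0" shows "\<forall>x. poly (q * q') x \<noteq> 0"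
proof
  fix x
  from assms have "poly q x \<noteq> 0" "poly q' x \<noteq> 0" by auto
  then show "poly (q * q') x \<noteq> 0" by simp
qed

lemma AA_subring: "is_subring AA"
proof -
  have ev1: "\<forall>x. poly (1::real poly) x \<noteq> 0" by simp
  have "0 \<in> AA" using AA_intro[OF ev1, of 0] by (simp add: ev_0)
  moreover have "1 \<in> AA" using AA_intro[OF ev1, of 1] by (simp add: ev_1)
  moreover have "a + b \<in> AA \<and> a - b \<in> AA \<and> a * b \<in> AA" if aA: "a \<in> AA" and bA: "b \<in> AA" for a b
  proof -
    obtain p q where a: "a = ev p / ev q" and nq: "\<forall>x. poly q x \<noteq> 0" using aA unfolding AA_def by blast
    obtain p' q' where b: "b = ev p' / ev q'" and nq': "\<forall>x. poly q' x \<noteq> 0" using bA unfolding AA_def by blast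
    have e0: "ev q \<noteq> 0" "ev q' \<noteq> 0" using nq nq' by (auto simp: ev_eq_0_iff)
    have "a + b = ev (p * q' + p' * q) / ev (q * q')"
      unfolding a b ev_add ev_mult using e0 by (simp add: field_simps)
    moreover have "a - b = ev (p * q' - p' * q) / ev (q * q')"
      unfolding a b ev_diff ev_mult using e0 by (simp add: field_simps)
    moreover have "a * b = ev (p * p') / ev (q * q')"
      unfolding a b ev_mult by simp
    ultimately show ?thesis using AA_intro[OF nr_mult[OF nq nq']] by simp
  qed
  ultimately show ?thesis unfolding is_subring_def by blast
qed

lemma ev_quot: "x = ev (fst (quot_of_fract x)) / ev (snd (quot_of_fract x))"
  by (metis Fract_ev Fract_quot_of_fract snd_quot_of_fract_nonzero)

lemma coprime_no_common_root:
  fixes a b :: "real poly"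
  assumes "coprime a b" "poly a x = 0" "poly b x = 0"
  shows False
proof -
  have "[:-x,1:] dvd a" "[:-x,1:] dvd b" using assms poly_eq_0_iff_dvd by auto
  then have "is_unit [:-x,1:]" using assms(1) coprime_common_divisor by blast
  then show False using is_unit_iff_degree[of "[:-x,1:]"] by simp
qed

lemma gen_AA: "1 / (1 + h^2) \<in> AA"
proof -
  define a where "a = fst (quot_of_fract h)"
  define b where "b = snd (quot_of_fract h)"
  have h: "h = ev a / ev b" unfolding a_def b_def by (rule ev_quot)
  have cop: "coprime a b" unfolding a_def b_def by (rule coprime_quot_of_fract)
  have b0: "ev b \<noteq> 0" unfolding b_def ev_eq_0_iff by simp
  have nr: "\<forall>x. poly (b^2 + a^2) x \<noteq> 0"
  proof
    fix x show "poly (b^2 + a^2) x \<noteq> 0"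
    proof
      assume "poly (b^2 + a^2) x = 0"
      then have "poly b x = 0 \<and> poly a x = 0" by (simp add: sum_power2_eq_zero_iff)
      then show False using coprime_no_common_root[OF cop] by blast
    qed
  qed
  have e0: "ev (b^2 + a^2) \<noteq> 0" using nr by (auto simp: ev_eq_0_iff)
  have "1 / (1 + h^2) = ev (b^2) / ev (b^2 + a^2)"
    using b0 e0 unfolding h ev_add ev_power by (simp add: field_simps power2_eq_square)
  then show ?thesis using AA_intro[OF nr] by simp
qed

lemma D_AA: "DD \<subseteq> AA"
  by (rule D_min[OF AA_subring gen_AA])




definition Id :: "real poly fract set \<Rightarrow> bool" where
  "Id I \<longleftrightarrow> I \<subseteq> DD \<and> 0 \<in> I \<and> (\<forall>x\<in>I. \<forall>y\<in>I. x + y \<in> I) \<and> (\<forall>d\<in>DD. \<forall>x\<in>I. d * x \<in> I)"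

lemma uu1_D: "1 - uu \<in> DD" using D_diff[OF D_1 uu_D] .

lemma G1:
  assumes Sadd: "\<And>x y. x \<in> S \<Longrightarrow> y \<in> S \<Longrightarrow> x + y \<in> S"
    and Smult: "\<And>d x. d \<in> DD \<Longrightarrow> x \<in> S \<Longrightarrow> d * x \<in> S"
  shows "uu * a \<in> S \<Longrightarrow> (1 - uu) ^ M * a \<in> S \<Longrightarrow> a \<in> S"
proof (induction M arbitrary: a)
  case 0 then show ?case by simp
next
  case (Suc M)
  define b where "b = (1 - uu) * a"
  have "uu * b = (1 - uu) * (uu * a)" unfolding b_def by (simp add: algebra_simps)
  then have "uu * b \<in> S" using Smult[OF uu1_D Suc.prems(1)] by metis
  moreover have "(1 - uu) ^ M * b \<in> S" using Suc.prems(2) unfolding b_def by (simp add: algebra_simps)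
  ultimately have "b \<in> S" using Suc.IH by blast
  moreover have "a = uu * a + b" unfolding b_def by (simp add: algebra_simps)
  ultimately show ?case using Sadd[OF Suc.prems(1)] by metis
qed

lemma G:
  assumes Sadd: "\<And>x y. x \<in> S \<Longrightarrow> y \<in> S \<Longrightarrow> x + y \<in> S"
    and Smult: "\<And>d x. d \<in> DD \<Longrightarrow> x \<in> S \<Longrightarrow> d * x \<in> S"
  shows "uu ^ N * x \<in> S \<Longrightarrow> (1 - uu) ^ M * x \<in> S \<Longrightarrow> x \<in> S"
proof (induction N arbitrary: x)
  case 0 then show ?case by simp
next
  case (Suc N)
  define a where "a = uu ^ N * x"
  have "uu * a \<in> S" using Suc.prems(1) unfolding a_def by (simp add: algebra_simps)
  moreover have "(1 - uu) ^ M * a = uu ^ N * ((1 - uu) ^ M * x)" unfolding a_def by (simp add: algebra_simps)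
  then have "(1 - uu) ^ M * a \<in> S" using Smult[OF D_power[OF uu_D] Suc.prems(2)] by metis
  ultimately have "a \<in> S" using G1[OF Sadd Smult] by blast
  then show ?case using Suc.IH Suc.prems(2) unfolding a_def by blast
qed

lemma AA_add: "a \<in> AA \<Longrightarrow> b \<in> AA \<Longrightarrow> a + b \<in> AA"
  and AA_mult: "a \<in> AA \<Longrightarrow> b \<in> AA \<Longrightarrow> a * b \<in> AA"
  and AA_diff: "a \<in> AA \<Longrightarrow> b \<in> AA \<Longrightarrow> a - b \<in> AA"
  using AA_subring unfolding is_subring_def by auto

lemma ev_AA: "ev p \<in> AA"
  using AA_intro[of 1 p] by (simp add: ev_1)

lemma D_in_AA: "x \<in> DD \<Longrightarrow> x \<in> AA" using D_AA by blast

definition cond :: "real poly fract set \<Rightarrow> real poly fract set" where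
  "cond I = {a \<in> AA. \<exists>n. uu ^ n * a \<in> I}"

lemma cond_props:
  assumes "Id I"
  shows "0 \<in> cond I" "cond I \<subseteq> AA"
    "a \<in> cond I \<Longrightarrow> b \<in> cond I \<Longrightarrow> a + b \<in> cond I"
    "c \<in> AA \<Longrightarrow> a \<in> cond I \<Longrightarrow> c * a \<in> cond I"
    "I \<subseteq> cond I"
proof -
  from assms have I: "I \<subseteq> DD" "0 \<in> I" "\<And>x y. x\<in>I \<Longrightarrow> y\<in>I \<Longrightarrow> x + y \<in> I"
    "\<And>d x. d\<in>DD \<Longrightarrow> x\<in>I \<Longrightarrow> d * x \<in> I" unfolding Id_def by auto
  show "0 \<in> cond I" unfolding cond_def using I(2) D_in_AA[OF D_0] by (auto intro!: exI[of _ 0])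
  show "cond I \<subseteq> AA" unfolding cond_def by auto
  show "I \<subseteq> cond I" unfolding cond_def using I(1) D_in_AA by (auto intro!: exI[of _ 0])
  show "a + b \<in> cond I" if "a \<in> cond I" "b \<in> cond I"
  proof -
    from that obtain n m where a: "a \<in> AA" "uu^n * a \<in> I" and b: "b \<in> AA" "uu^m * b \<in> I"
      unfolding cond_def by auto
    have "uu^(n+m) * (a + b) = uu^m * (uu^n * a) + uu^n * (uu^m * b)"
      by (simp add: algebra_simps power_add)
    also have "\<dots> \<in> I" using I(3,4) D_power[OF uu_D] a b by blast
    finally show ?thesis unfolding cond_def using AA_add[OF a(1) b(1)] by blast
  qed
  show "c * a \<in> cond I" if "c \<in> AA" "a \<in> cond I"
  proof -
    from that obtain n where a: "a \<in> AA" "uu^n * a \<in> I" unfolding cond_def by auto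
    from AA_to_D[OF that(1)] obtain k where k: "uu^k * c \<in> DD" by blast
    have "uu^(k+n) * (c * a) = (uu^k * c) * (uu^n * a)" by (simp add: algebra_simps power_add)
    also have "\<dots> \<in> I" using I(4) k a by blast
    finally show ?thesis unfolding cond_def using AA_mult[OF that(1) a(1)] by blast
  qed
qed

lemma principal:
  assumes J: "J \<subseteq> AA" "0 \<in> J" "\<And>a b. a \<in> J \<Longrightarrow> b \<in> J \<Longrightarrow> a + b \<in> J"
    "\<And>c a. c \<in> AA \<Longrightarrow> a \<in> J \<Longrightarrow> c * a \<in> J"
  shows "\<exists>g. ev g \<in> J \<and> (\<forall>x\<in>J. \<exists>a\<in>AA. x = ev g * a)"
proof (cases "J \<subseteq> {0}")
  case True
  then show ?thesis using J(2) D_in_AA[OF D_0] by (intro exI[of _ 0]) (auto simp: ev_0)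
next
  case False
  then obtain x0 where x0: "x0 \<in> J" "x0 \<noteq> 0" by auto
  then obtain p0 q0 where x0e: "x0 = ev p0 / ev q0" and nq0: "\<forall>x. poly q0 x \<noteq> 0"
    using J(1) unfolding AA_def by blast
  have eq0: "ev q0 \<noteq> 0" using nq0 by (auto simp: ev_eq_0_iff)
  have "ev p0 = ev q0 * x0" using eq0 x0e by simp
  then have "ev p0 \<in> J" using J(4)[OF ev_AA x0(1)] by simp
  moreover have "p0 \<noteq> 0" using x0 x0e by (auto simp: ev_0)
  ultimately have "p0 \<noteq> 0 \<and> ev p0 \<in> J" by blast
  then obtain g where g: "g \<noteq> 0 \<and> ev g \<in> J" and gmin: "\<And>p. p \<noteq> 0 \<and> ev p \<in> J \<Longrightarrow> degree g \<le> degree p"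
    using ex_has_least_nat[of "\<lambda>p. p \<noteq> 0 \<and> ev p \<in> J" p0 degree] by blast
  have "\<exists>a\<in>AA. x = ev g * a" if xJ: "x \<in> J" for x
  proof -
    obtain p q where xe: "x = ev p / ev q" and nq: "\<forall>x. poly q x \<noteq> 0"
      using xJ J(1) unfolding AA_def by blast
    have eq: "ev q \<noteq> 0" using nq by (auto simp: ev_eq_0_iff)
    have "ev p = ev q * x" using eq xe by simp
    then have pJ: "ev p \<in> J" using J(4)[OF ev_AA xJ] by simp
    have eqm: "p mod g = p + (- (p div g)) * g" by (simp add: minus_div_mult_eq_mod[symmetric])
    have "ev (p mod g) = ev p + ev (- (p div g)) * ev g"
      by (subst eqm) (simp only: ev_add ev_mult)
    also have "\<dots> \<in> J" using J(3)[OF pJ J(4)[OF ev_AA conjunct2[OF g]]] .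
    finally have rJ: "ev (p mod g) \<in> J" .
    have "p mod g = 0"
    proof (rule ccontr)
      assume r0: "p mod g \<noteq> 0"
      then have "degree (p mod g) < degree g" using degree_mod_less'[of g p] g by blast
      with gmin[of "p mod g"] r0 rJ show False by auto
    qed
    then have "p = p div g * g" using div_mult_mod_eq[of p g] by simp
    then have "p = g * (p div g)" by (simp add: mult.commute)
    then have "x = ev g * (ev (p div g) / ev q)" using xe by (metis ev_mult times_divide_eq_right)
    moreover have "ev (p div g) / ev q \<in> AA" by (rule AA_intro[OF nq])
    ultimately show ?thesis by blast
  qed
  then show ?thesis using g by blast
qed




lemma Id_D: "Id I \<Longrightarrow> I \<subseteq> DD" and Id_0: "Id I \<Longrightarrow> 0 \<in> I"
  and Id_add: "Id I \<Longrightarrow> x \<in> I \<Longrightarrow> y \<in> I \<Longrightarrow> x + y \<in> I"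
  and Id_mult: "Id I \<Longrightarrow> d \<in> DD \<Longrightarrow> x \<in> I \<Longrightarrow> d * x \<in> I"
  unfolding Id_def by auto

lemma cond_principal:
  assumes "Id I"
  shows "\<exists>g. ev g \<in> cond I \<and> (\<forall>x\<in>cond I. \<exists>a\<in>AA. x = ev g * a)"
  by (rule principal) (use cond_props[OF assms] in auto)

lemma L2:
  assumes I: "Id I"
  shows "\<exists>y\<in>I. \<forall>x\<in>I. \<exists>m. \<exists>d\<in>DD. uu ^ m * x = y * d"
proof -
  obtain g where g: "ev g \<in> cond I" and gen: "\<forall>x\<in>cond I. \<exists>a\<in>AA. x = ev g * a"
    using cond_principal[OF I] by blast
  from g obtain n where n: "uu ^ n * ev g \<in> I" unfolding cond_def by blast
  have "\<exists>m. \<exists>d\<in>DD. uu ^ m * x = (uu ^ n * ev g) * d" if xI: "x \<in> I" for x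
  proof -
    have "x \<in> cond I" using cond_props(5)[OF I] xI by blast
    then obtain a where a: "a \<in> AA" "x = ev g * a" using gen by blast
    obtain k where k: "uu ^ k * a \<in> DD" using AA_to_D[OF a(1)] by blast
    have "uu ^ (n + k) * x = (uu ^ n * ev g) * (uu ^ k * a)" using a(2) by (simp add: power_add algebra_simps)
    then show ?thesis using k by blast
  qed
  then show ?thesis using n by blast
qed

definition primeI :: "real poly fract set \<Rightarrow> bool" where
  "primeI P \<longleftrightarrow> Id P \<and> 1 \<notin> P \<and> (\<forall>a\<in>DD. \<forall>b\<in>DD. a * b \<in> P \<longrightarrow> a \<in> P \<or> b \<in> P)"

lemma L1:
  assumes P: "primeI P" and Pnz: "z \<in> P" "z \<noteq> 0" and uP: "uu \<notin> P"
    and Q: "Id Q" and PQ: "P \<subseteq> Q" and xQ: "x \<in> Q" and xP: "x \<notin> P"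
  shows "\<exists>N. uu ^ N \<in> Q"
proof -
  have IP: "Id P" and oneP: "1 \<notin> P" and prm: "\<And>a b. a\<in>DD \<Longrightarrow> b\<in>DD \<Longrightarrow> a * b \<in> P \<Longrightarrow> a \<in> P \<or> b \<in> P"
    using P unfolding primeI_def by auto
  have upow: "uu ^ n \<notin> P" for n
  proof (induction n)
    case 0 then show ?case using oneP by simp
  next
    case (Suc n) then show ?case using prm[OF uu_D D_power[OF uu_D]] uP by auto
  qed
  have canc: "a \<in> P" if "a \<in> DD" "uu ^ n * a \<in> P" for a n
    using prm[OF D_power[OF uu_D] that(1) that(2)] upow by blast
  let ?J = "cond P"
  let ?J' = "cond Q"
  obtain g where g: "ev g \<in> ?J" and gen: "\<forall>x\<in>?J. \<exists>a\<in>AA. x = ev g * a"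
    using cond_principal[OF IP] by blast
  obtain g' where g': "ev g' \<in> ?J'" and gen': "\<forall>x\<in>?J'. \<exists>a\<in>AA. x = ev g' * a"
    using cond_principal[OF Q] by blast
  have Jprime: "a \<in> ?J \<or> b \<in> ?J" if ab: "a \<in> AA" "b \<in> AA" "a * b \<in> ?J" for a b
  proof -
    obtain n where n: "uu ^ n * (a * b) \<in> P" using ab(3) unfolding cond_def by blast
    obtain k1 where k1: "uu ^ k1 * a \<in> DD" using AA_to_D[OF ab(1)] by blast
    obtain k2 where k2: "uu ^ k2 * b \<in> DD" using AA_to_D[OF ab(2)] by blast
    have "(uu ^ k1 * a) * ((uu ^ k2 * b) * uu ^ n) = uu ^ (k1 + k2) * (uu ^ n * (a * b))"
      by (simp add: power_add algebra_simps)
    also have "\<dots> \<in> P" using Id_mult[OF IP D_power[OF uu_D] n] .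
    finally have "uu ^ k1 * a \<in> P \<or> (uu ^ k2 * b) * uu ^ n \<in> P"
      using prm[OF k1 D_mult[OF k2 D_power[OF uu_D]]] by blast
    then show ?thesis
    proof
      assume "uu ^ k1 * a \<in> P" then show ?thesis using ab(1) unfolding cond_def by blast
    next
      assume "(uu ^ k2 * b) * uu ^ n \<in> P"
      then have "uu ^ k2 * b \<in> P" using prm[OF k2 D_power[OF uu_D]] upow by blast
      then show ?thesis using ab(2) unfolding cond_def by blast
    qed
  qed
  have "ev g \<in> ?J'"
  proof -
    from g obtain n where "uu ^ n * ev g \<in> P" unfolding cond_def by blast
    then show ?thesis using g PQ unfolding cond_def by blast
  qed
  then obtain c where c: "c \<in> AA" "ev g = ev g' * c" using gen' by blast
  have "ev g' \<in> ?J \<or> c \<in> ?J" using Jprime[OF ev_AA c(1)] g c(2) by simp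
  then show ?thesis
  proof
    assume g'J: "ev g' \<in> ?J"
    have "x \<in> ?J'" using cond_props(5)[OF Q] xQ by blast
    then obtain a where a: "a \<in> AA" "x = ev g' * a" using gen' by blast
    then have "x \<in> ?J" using cond_props(4)[OF IP a(1) g'J] by (simp add: mult.commute)
    then obtain n where "uu ^ n * x \<in> P" unfolding cond_def by blast
    then have "x \<in> P" using canc xQ Id_D[OF Q] by blast
    with xP show ?thesis by blast
  next
    assume cJ: "c \<in> ?J"
    then obtain d where d: "d \<in> AA" "c = ev g * d" using gen by blast
    have "z \<in> ?J" using cond_props(5)[OF IP] Pnz by blast
    then obtain a where "z = ev g * a" using gen by blast
    then have g0: "ev g \<noteq> 0" using Pnz by auto
    have "ev g * 1 = ev g * (ev g' * d)" using c(2) d(2) by (simp add: algebra_simps)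
    then have "ev g' * d = 1" using g0 by simp
    then have "1 \<in> ?J'" using cond_props(4)[OF Q d(1) g'] by (simp add: mult.commute)
    then show ?thesis unfolding cond_def by auto
  qed
qed




lemma common_denom:
  fixes n :: nat
  shows "(\<forall>i\<le>n. f i \<in> AA) \<Longrightarrow> \<exists>s. (\<forall>x. poly s x \<noteq> 0) \<and> (\<forall>i\<le>n. \<exists>e. ev s * f i = ev e)"
proof (induction n)
  case 0
  then obtain p q where "f 0 = ev p / ev q" "\<forall>x. poly q x \<noteq> 0" unfolding AA_def by auto
  moreover then have "ev q \<noteq> 0" by (auto simp: ev_eq_0_iff)
  ultimately show ?case by (intro exI[of _ q]) auto
next
  case (Suc n)
  then obtain s where s: "\<forall>x. poly s x \<noteq> 0" "\<forall>i\<le>n. \<exists>e. ev s * f i = ev e" by auto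
  obtain p q where pq: "f (Suc n) = ev p / ev q" "\<forall>x. poly q x \<noteq> 0" using Suc.prems unfolding AA_def by blast
  have q0: "ev q \<noteq> 0" using pq(2) by (auto simp: ev_eq_0_iff)
  have "\<exists>e. ev (s * q) * f i = ev e" if "i \<le> Suc n" for i
  proof (cases "i = Suc n")
    case True
    then show ?thesis using pq q0 by (intro exI[of _ "s * p"]) (simp add: ev_mult)
  next
    case False
    with that s(2) obtain e where "ev s * f i = ev e" by fastforce
    then show ?thesis by (intro exI[of _ "q * e"]) (simp add: ev_mult algebra_simps)
  qed
  then show ?case using nr_mult[OF s(1) pq(2)] by blast
qed

lemma L3:
  assumes "integral_over DD x" shows "x \<in> AA"
proof -
  from assms obtain p where p: "degree p \<ge> 1" "lead_coeff p = 1" "\<forall>i. coeff p i \<in> DD" "poly p x = 0"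
    unfolding integral_over_def by blast
  define n where "n = degree p"
  have "\<forall>i\<le>n. coeff p i \<in> AA" using p(3) D_in_AA by blast
  from common_denom[OF this] obtain s where s: "\<forall>x. poly s x \<noteq> 0"
    and se: "\<forall>i\<le>n. \<exists>e. ev s * coeff p i = ev e" by blast
  define e where "e i = (SOME e. ev s * coeff p i = ev e)" for i
  have e: "ev s * coeff p i = ev (e i)" if "i \<le> n" for i
    unfolding e_def using se that by (metis (mono_tags, lifting) someI_ex)
  have en: "e n = s" using e[of n] p(2) unfolding n_def by (simp add: ev_eq_iff)
  define a where "a = fst (quot_of_fract x)"
  define b where "b = snd (quot_of_fract x)"
  have xe: "x = ev a / ev b" unfolding a_def b_def by (rule ev_quot)
  have cop: "coprime a b" unfolding a_def b_def by (rule coprime_quot_of_fract)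
  have b0: "ev b \<noteq> 0" unfolding b_def ev_eq_0_iff by simp
  have "\<forall>r. poly b r \<noteq> 0"
  proof (intro allI notI)
    fix r assume br: "poly b r = 0"
    define E where "E = (\<Sum>i\<le>n. e i * a ^ i * b ^ (n - i))"
    have pw: "x ^ i * ev b ^ n = ev a ^ i * ev b ^ (n - i)" if "i \<le> n" for i
    proof -
      have "ev b ^ n = ev b ^ i * ev b ^ (n - i)" using that by (simp add: power_add[symmetric])
      moreover have "x ^ i * ev b ^ i = ev a ^ i" using b0 unfolding xe by (simp add: power_divide)
      ultimately show ?thesis by (simp add: algebra_simps)
    qed
    have "ev E = (\<Sum>i\<le>n. ev (e i) * ev a ^ i * ev b ^ (n - i))"
      unfolding E_def ev_sum by (simp add: ev_mult ev_power)
    also have "\<dots> = (\<Sum>i\<le>n. (ev s * coeff p i) * (x ^ i * ev b ^ n))"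
      by (rule sum.cong) (simp_all add: e pw algebra_simps)
    also have "\<dots> = ev s * ev b ^ n * poly p x"
      unfolding poly_altdef n_def by (simp add: sum_distrib_left algebra_simps)
    also have "\<dots> = 0" using p(4) by simp
    finally have E0: "E = 0" by (simp add: ev_eq_0_iff)
    have "poly E r = (\<Sum>i\<le>n. poly (e i) r * poly a r ^ i * poly b r ^ (n - i))"
      unfolding E_def by (simp add: poly_sum poly_power)
    also have "\<dots> = (\<Sum>i<n. poly (e i) r * poly a r ^ i * poly b r ^ (n - i)) + poly (e n) r * poly a r ^ n"
      by (simp add: lessThan_Suc_atMost[symmetric])
    also have "(\<Sum>i<n. poly (e i) r * poly a r ^ i * poly b r ^ (n - i)) = 0"
      using br by (intro sum.neutral) auto
    finally have "poly s r * poly a r ^ n = 0" using E0 en by simp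
    then have "poly a r = 0" using s by simp
    then show False using coprime_no_common_root[OF cop _ br] by blast
  qed
  then show ?thesis unfolding xe by (rule AA_intro)
qed




lemma TT_nz: "TT \<noteq> 0" unfolding TT_def ev_eq_0_iff by simp

definition IT :: "real poly fract" where "IT = inverse TT"

definition phi :: "real poly \<Rightarrow> real poly fract" where
  "phi p = poly (map_poly CC p) IT"

lemma phi_add: "phi (p + q) = phi p + phi q"
  unfolding phi_def by (rule poly_map_poly_hom_add) (auto simp: CC_0 CC_add)
lemma phi_mult: "phi (p * q) = phi p * phi q"
  unfolding phi_def by (rule poly_map_poly_hom_mult) (auto simp: CC_0 CC_add CC_mult)
lemma phi_const: "phi [:c:] = CC c"
  unfolding phi_def by (simp add: map_poly_pCons CC_0)
lemma phi_1: "phi 1 = 1" using phi_const[of 1] by (simp add: CC_1 one_pCons)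
lemma phi_X: "phi [:0,1:] = IT"
  unfolding phi_def by (simp add: map_poly_pCons CC_0 CC_1)

lemma phi_nz: assumes "p \<noteq> 0" shows "phi p \<noteq> 0"
proof -
  define P where "P = map_poly CC p"
  have dP: "degree P = degree p" unfolding P_def by (rule degree_map_poly) (simp add: CC_eq_0_iff)
  have "poly (reflect_poly P) TT = TT ^ degree P * poly P (inverse TT)"
    by (rule poly_reflect_poly_nz[OF TT_nz])
  moreover have "reflect_poly P = map_poly CC (reflect_poly p)"
    using dP unfolding P_def by (intro poly_eqI) (simp add: coeff_reflect_poly coeff_map_poly CC_0)
  ultimately have "ev (reflect_poly p) = TT ^ degree P * phi p"
    unfolding phi_def IT_def P_def ev_expand by simp
  moreover have "ev (reflect_poly p) \<noteq> 0" using assms by (simp add: ev_eq_0_iff)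
  ultimately show ?thesis by auto
qed

definition sig :: "real poly fract \<Rightarrow> real poly fract" where
  "sig x = phi (fst (quot_of_fract x)) / phi (snd (quot_of_fract x))"

lemma sig_frac: assumes q0: "q \<noteq> 0" shows "sig (ev p / ev q) = phi p / phi q"
proof -
  define x where "x = ev p / ev q"
  define a where "a = fst (quot_of_fract x)"
  define b where "b = snd (quot_of_fract x)"
  have b0: "b \<noteq> 0" unfolding b_def by simp
  have "ev a / ev b = ev p / ev q" unfolding a_def b_def x_def by (rule ev_quot[symmetric])
  then have "ev a * ev q = ev p * ev b" using b0 q0 by (simp add: ev_eq_0_iff field_simps)
  then have "a * q = p * b" by (simp add: ev_mult[symmetric] ev_eq_iff)
  then have "phi a * phi q = phi p * phi b" by (simp add: phi_mult[symmetric])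
  then have "phi a / phi b = phi p / phi q" using phi_nz[OF b0] phi_nz[OF q0] by (simp add: field_simps)
  then show ?thesis unfolding sig_def x_def[symmetric] a_def[symmetric] b_def[symmetric] .
qed

lemma sig_ev: "sig (ev p) = phi p"
  using sig_frac[of 1 p] by (simp add: ev_1 phi_1)

lemma frac_rep: obtains p q where "q \<noteq> 0" "x = ev p / ev q"
  using ev_quot[of x] snd_quot_of_fract_nonzero by blast

lemma sig_add: "sig (x + y) = sig x + sig y"
proof -
  obtain p q where q: "q \<noteq> 0" "x = ev p / ev q" by (rule frac_rep)
  obtain p' q' where q': "q' \<noteq> 0" "y = ev p' / ev q'" by (rule frac_rep)
  have e: "ev q \<noteq> 0" "ev q' \<noteq> 0" using q q' by (auto simp: ev_eq_0_iff)
  have "x + y = ev (p * q' + p' * q) / ev (q * q')" using e unfolding q q' ev_add ev_mult by (simp add: field_simps)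
  then have "sig (x + y) = phi (p * q' + p' * q) / phi (q * q')" using sig_frac q q' by simp
  also have "\<dots> = phi p / phi q + phi p' / phi q'"
    using phi_nz[OF q(1)] phi_nz[OF q'(1)] unfolding phi_add phi_mult by (simp add: field_simps)
  finally show ?thesis using sig_frac q q' by simp
qed

lemma sig_mult: "sig (x * y) = sig x * sig y"
proof -
  obtain p q where q: "q \<noteq> 0" "x = ev p / ev q" by (rule frac_rep)
  obtain p' q' where q': "q' \<noteq> 0" "y = ev p' / ev q'" by (rule frac_rep)
  have "x * y = ev (p * p') / ev (q * q')" unfolding q q' ev_mult by simp
  then have "sig (x * y) = phi (p * p') / phi (q * q')" using sig_frac q q' by simp
  then show ?thesis using sig_frac q q' unfolding phi_mult by simp
qed

lemma sig_0: "sig 0 = 0" using sig_ev[of 0] by (simp add: ev_0 phi_def)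
lemma sig_1: "sig 1 = 1" using sig_ev[of 1] by (simp add: ev_1 phi_1)
lemma sig_uminus: "sig (- x) = - sig x"
proof -
  have "sig (- x) + sig x = 0" by (simp add: sig_add[symmetric] sig_0)
  then show ?thesis by (simp add: eq_neg_iff_add_eq_0)
qed
lemma sig_diff: "sig (x - y) = sig x - sig y"
  using sig_add[of x "- y"] by (simp add: sig_uminus)
lemma sig_power: "sig (x ^ n) = sig x ^ n"
  by (induction n) (simp_all add: sig_1 sig_mult)
lemma sig_inverse: "sig (inverse x) = inverse (sig x)"
proof (cases "x = 0")
  case True then show ?thesis by (simp add: sig_0)
next
  case False
  then have "sig x * sig (inverse x) = 1" by (simp add: sig_mult[symmetric] sig_1)
  then show ?thesis by (metis inverse_unique mult.commute)
qed
lemma sig_divide: "sig (x / y) = sig x / sig y"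
  by (simp add: divide_inverse sig_mult sig_inverse)

lemma sig_CC: "sig (CC c) = CC c" by (metis CC_def sig_ev phi_const)
lemma sig_TT: "sig TT = IT" unfolding TT_def by (simp add: sig_ev phi_X)
lemma sig_IT: "sig IT = TT" unfolding IT_def by (simp add: sig_inverse sig_TT IT_def)

lemma sig_poly: "sig (poly (map_poly CC p) t) = poly (map_poly CC p) (sig t)"
  by (induction p) (simp_all add: map_poly_pCons CC_0 sig_add sig_mult sig_CC sig_0)

lemma sig_sig: "sig (sig x) = x"
proof -
  have ev: "sig (sig (ev p)) = ev p" for p
    by (simp add: sig_ev phi_def sig_poly sig_IT ev_expand[symmetric])
  obtain p q where q: "q \<noteq> 0" "x = ev p / ev q" by (rule frac_rep)
  show ?thesis unfolding q by (simp add: sig_divide ev)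
qed

lemma sig_inj: "sig x = sig y \<Longrightarrow> x = y" by (metis sig_sig)

lemma sig_uu: "sig uu = 1 - uu"
proof -
  have t2: "TT^2 \<noteq> 0" using TT_nz by simp
  have p0: "1 + TT^2 \<noteq> 0" unfolding ev_uu ev_eq_0_iff by simp
  have "sig uu = 1 / (1 + IT^2)" unfolding uu_def by (simp add: sig_divide sig_add sig_power sig_1 sig_TT)
  also have "\<dots> = TT^2 / (1 + TT^2)" unfolding IT_def using t2 p0
    by (simp add: field_simps power_inverse)
  also have "\<dots> = 1 - uu" unfolding uu_def using p0 by (simp add: field_simps)
  finally show ?thesis .
qed

lemma sig_D: "x \<in> DD \<Longrightarrow> sig x \<in> DD"
proof -
  have "DD \<subseteq> {x. sig x \<in> DD}"
  proof (rule D_min)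
    show "is_subring {x. sig x \<in> DD}" unfolding is_subring_def
      by (simp add: sig_0 sig_1 sig_add sig_diff sig_mult D_0 D_1 D_add D_diff D_mult)
    show "1 / (1 + h^2) \<in> {x. sig x \<in> DD}" for h
      by (simp add: sig_divide sig_add sig_power sig_1 D_gen)
  qed
  then show "x \<in> DD \<Longrightarrow> sig x \<in> DD" by blast
qed

lemma sig_D_iff: "sig x \<in> DD \<longleftrightarrow> x \<in> DD" by (metis sig_D sig_sig)




abbreviation RR :: "real poly fract ring" where "RR \<equiv> sub_ring_struct DD"

lemma RR_simps [simp]: "carrier RR = DD" "monoid.mult RR = (*)" "one RR = 1" "zero RR = 0" "add RR = (+)"
  by (simp_all add: sub_ring_struct_def)

lemma RR_domain: "domain RR"
proof (rule domain.intro)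
  show "cring RR"
  proof (rule cringI)
    show "abelian_group RR"
      by (rule abelian_groupI) (auto simp: D_add D_0 intro!: bexI[of _ "- x" for x] D_uminus)
    show "comm_monoid RR"
      by (rule comm_monoidI) (auto simp: D_mult D_1)
    show "\<And>x y z. x \<in> carrier RR \<Longrightarrow> y \<in> carrier RR \<Longrightarrow> z \<in> carrier RR \<Longrightarrow>
      (x \<oplus>\<^bsub>RR\<^esub> y) \<otimes>\<^bsub>RR\<^esub> z = x \<otimes>\<^bsub>RR\<^esub> z \<oplus>\<^bsub>RR\<^esub> y \<otimes>\<^bsub>RR\<^esub> z"
      by (simp add: algebra_simps)
  qed
  show "domain_axioms RR" by (rule domain_axioms.intro) auto
qed

interpretation RRd: domain RR by (rule RR_domain)

lemma ideal_Id: assumes "ideal I RR" shows "Id I"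
proof -
  interpret ideal I RR by fact
  show ?thesis unfolding Id_def
    using a_subset zero_closed a_closed I_l_closed by auto
qed

lemma sig_Id: assumes I: "Id I" shows "Id (sig ` I)"
proof -
  have "I \<subseteq> DD" using Id_D[OF I] .
  then have "sig ` I \<subseteq> DD" using sig_D by blast
  moreover have "0 \<in> sig ` I" using Id_0[OF I] sig_0 by force
  moreover have "x + y \<in> sig ` I" if "x \<in> sig ` I" "y \<in> sig ` I" for x y
  proof -
    from that obtain a b where "a \<in> I" "b \<in> I" "x = sig a" "y = sig b" by blast
    then show ?thesis using Id_add[OF I] sig_add[of a b] by force
  qed
  moreover have "d * x \<in> sig ` I" if "d \<in> DD" "x \<in> sig ` I" for d x
  proof -
    from that obtain w where w: "w \<in> I" "x = sig w" by blast
    have "sig d * w \<in> I" using Id_mult[OF I sig_D[OF that(1)] w(1)] .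
    moreover have "sig (sig d * w) = d * x" by (simp add: sig_mult sig_sig w(2))
    ultimately show ?thesis by force
  qed
  ultimately show ?thesis unfolding Id_def by blast
qed

lemma sig_mem: "sig x \<in> sig ` I \<longleftrightarrow> x \<in> I"
  by (metis image_iff sig_inj)

lemma sig_primeI: assumes P: "primeI P" shows "primeI (sig ` P)"
proof -
  have IP: "Id P" and oneP: "1 \<notin> P" and prm: "\<And>a b. a\<in>DD \<Longrightarrow> b\<in>DD \<Longrightarrow> a * b \<in> P \<Longrightarrow> a \<in> P \<or> b \<in> P"
    using P unfolding primeI_def by auto
  have "1 \<notin> sig ` P" using oneP sig_mem[of 1 P] sig_1 by simp
  moreover have "a \<in> sig ` P \<or> b \<in> sig ` P" if "a \<in> DD" "b \<in> DD" "a * b \<in> sig ` P" for a b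
  proof -
    have "sig a * sig b \<in> P" using that(3) sig_mem[of "sig a * sig b" P] by (simp add: sig_mult[symmetric] sig_sig)
    then have "sig a \<in> P \<or> sig b \<in> P" using prm sig_D that by blast
    then show ?thesis using sig_mem sig_sig by metis
  qed
  ultimately show ?thesis unfolding primeI_def using sig_Id[OF IP] by blast
qed

lemma key_max:
  assumes P: "primeI P" and z: "z \<in> P" "z \<noteq> 0" and J: "Id J" and PJ: "P \<subseteq> J"
    and x: "x \<in> J" "x \<notin> P"
  shows "1 \<in> J"
proof -
  have IP: "Id P" and oneP: "1 \<notin> P" using P unfolding primeI_def by auto
  have Jadd: "\<And>a b. a \<in> J \<Longrightarrow> b \<in> J \<Longrightarrow> a + b \<in> J" and Jmult: "\<And>d a. d \<in> DD \<Longrightarrow> a \<in> J \<Longrightarrow> d * a \<in> J"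
    using Id_add[OF J] Id_mult[OF J] by auto
  have A: "\<exists>N. uu ^ N \<in> J" if "uu \<notin> P" using L1[OF P z that J PJ x] .
  have B: "\<exists>M. (1 - uu) ^ M \<in> J" if nP: "1 - uu \<notin> P"
  proof -
    have "sig (1 - uu) = uu" by (simp add: sig_diff sig_1 sig_uu)
    then have "uu \<notin> sig ` P" using nP sig_mem[of "1 - uu" P] by simp
    moreover have "sig z \<in> sig ` P" "sig z \<noteq> 0" using z sig_0 sig_inj by auto
    moreover have "sig ` P \<subseteq> sig ` J" using PJ by blast
    moreover have "sig x \<in> sig ` J" "sig x \<notin> sig ` P" using x sig_mem by auto
    ultimately obtain N where "uu ^ N \<in> sig ` J"
      using L1[OF sig_primeI[OF P], of "sig z" "sig ` J" "sig x"] sig_Id[OF J] by blast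
    then have "sig (uu ^ N) \<in> J" using sig_mem sig_sig by metis
    then show ?thesis by (auto simp: sig_power sig_uu)
  qed
  have fin: "1 \<in> J" if "uu ^ N \<in> J" "(1 - uu) ^ M \<in> J" for N M
    using G[OF Jadd Jmult, of N 1 M] that by simp
  show ?thesis
  proof (cases "uu \<in> P")
    case True
    then have "1 - uu \<notin> P" using oneP Id_add[OF IP, of uu "1 - uu"] by auto
    then obtain M where "(1 - uu) ^ M \<in> J" using B by blast
    moreover have "uu ^ 1 \<in> J" using True PJ by auto
    ultimately show ?thesis using fin by blast
  next
    case False
    then obtain N where N: "uu ^ N \<in> J" using A by blast
    show ?thesis
    proof (cases "1 - uu \<in> P")
      case True
      then have "(1 - uu) ^ 1 \<in> J" using PJ by auto
      then show ?thesis using fin N by blast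
    next
      case False
      then show ?thesis using B fin N by blast
    qed
  qed
qed




lemma RR_ring: "ring RR" using RRd.ring_axioms .

lemma RR_noeth: "noetherian_domain RR"
proof (intro noetherian_domain.intro noetherian_ring.intro noetherian_ring_axioms.intro RR_domain RR_ring)
  fix I assume Iid: "ideal I RR"
  have I: "Id I" by (rule ideal_Id[OF Iid])
  obtain y where y: "y \<in> I" and yg: "\<forall>x\<in>I. \<exists>m. \<exists>d\<in>DD. uu ^ m * x = y * d" using L2[OF I] by blast
  obtain y' where y': "y' \<in> sig ` I" and yg': "\<forall>x\<in>sig ` I. \<exists>m. \<exists>d\<in>DD. uu ^ m * x = y' * d"
    using L2[OF sig_Id[OF I]] by blast
  define z where "z = sig y'"
  have z: "z \<in> I" unfolding z_def using y' sig_sig by auto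
  define A where "A = {y, z}"
  have AI: "A \<subseteq> I" unfolding A_def using y z by auto
  have AD: "A \<subseteq> carrier RR" using AI Id_D[OF I] by auto
  define K where "K = genideal RR A"
  have Kid: "ideal K RR" unfolding K_def by (rule RRd.genideal_ideal[OF AD])
  have AK: "A \<subseteq> K" unfolding K_def by (rule RRd.genideal_self[OF AD])
  have KI: "K \<subseteq> I" unfolding K_def by (rule RRd.genideal_minimal[OF Iid AI])
  have K: "Id K" by (rule ideal_Id[OF Kid])
  have "I \<subseteq> K"
  proof
    fix x assume xI: "x \<in> I"
    obtain m d where d: "d \<in> DD" "uu ^ m * x = y * d" using yg xI by blast
    have "y * d \<in> K" using Id_mult[OF K d(1), of y] AK unfolding A_def by (simp add: mult.commute)
    then have 1: "uu ^ m * x \<in> K" using d(2) by simp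
    have "sig x \<in> sig ` I" using xI by blast
    then obtain m' d' where d': "d' \<in> DD" "uu ^ m' * sig x = y' * d'" using yg' by blast
    then have "sig (uu ^ m' * sig x) = sig (y' * d')" by simp
    then have "(1 - uu) ^ m' * x = z * sig d'" by (simp add: sig_mult sig_power sig_uu sig_sig z_def)
    moreover have "z * sig d' \<in> K" using Id_mult[OF K sig_D[OF d'(1)], of z] AK unfolding A_def
      by (simp add: mult.commute)
    ultimately have 2: "(1 - uu) ^ m' * x \<in> K" by simp
    show "x \<in> K" using G[OF Id_add[OF K] Id_mult[OF K] 1 2] by blast
  qed
  then have "I = genideal RR A" using KI unfolding K_def by blast
  moreover have "finite A" unfolding A_def by simp
  ultimately show "\<exists>A \<subseteq> carrier RR. finite A \<and> I = genideal RR A" using AD by blast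
qed

lemma RR_prime_max:
  assumes Pp: "primeideal P RR" and Pnz: "P \<noteq> {0}"
  shows "maximalideal P RR"
proof -
  interpret primeideal P RR by fact
  have Pid: "ideal P RR" by (rule is_ideal)
  have IdP: "Id P" by (rule ideal_Id[OF Pid])
  have oneP: "1 \<notin> P"
  proof
    assume "1 \<in> P"
    then have "P = carrier RR" using one_imp_carrier by simp
    then show False using I_notcarr by simp
  qed
  have prP: "primeI P" unfolding primeI_def using IdP oneP I_prime by auto
  obtain z where z: "z \<in> P" "z \<noteq> 0" using Pnz Id_0[OF IdP] by blast
  show ?thesis
  proof (rule maximalidealI[OF Pid I_notcarr])
    fix J assume Jid: "ideal J RR" and PJ: "P \<subseteq> J" and JD: "J \<subseteq> carrier RR"
    show "J = P \<or> J = carrier RR"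
    proof (cases "J = P")
      case False
      then obtain x where x: "x \<in> J" "x \<notin> P" using PJ by blast
      have "1 \<in> J" using key_max[OF prP z ideal_Id[OF Jid] PJ x] .
      then have "J = carrier RR" using ideal.one_imp_carrier[OF Jid] by simp
      then show ?thesis by blast
    qed simp
  qed
qed

lemma RR_int_closed: "integrally_closed_sub DD"
  unfolding integrally_closed_sub_def
proof (intro ballI impI)
  fix x assume ix: "integral_over DD x"
  have Sadd: "\<And>a b. a \<in> DD \<Longrightarrow> b \<in> DD \<Longrightarrow> a + b \<in> DD" by (rule D_add)
  have Smult: "\<And>d a. d \<in> DD \<Longrightarrow> a \<in> DD \<Longrightarrow> d * a \<in> DD" by (rule D_mult)
  obtain n where n: "uu ^ n * x \<in> DD" using AA_to_D[OF L3[OF ix]] by blast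
  have "integral_over DD (sig x)"
  proof -
    from ix obtain p where p: "degree p \<ge> 1" "lead_coeff p = 1" "\<forall>i. coeff p i \<in> DD" "poly p x = 0"
      unfolding integral_over_def by blast
    define p' where "p' = map_poly sig p"
    have dp: "degree p' = degree p" unfolding p'_def
      by (rule degree_map_poly) (metis sig_0 sig_inj)
    have cp: "coeff p' i = sig (coeff p i)" for i unfolding p'_def by (simp add: coeff_map_poly sig_0)
    have "poly p' (sig x) = sig (poly p x)" unfolding p'_def
      by (rule poly_map_poly_hom_eval) (simp_all add: sig_0 sig_add sig_mult)
    then have "poly p' (sig x) = 0" using p(4) sig_0 by simp
    moreover have "lead_coeff p' = 1" using dp cp p(2) sig_1 by simp
    moreover have "\<forall>i. coeff p' i \<in> DD" using cp p(3) sig_D by simp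
    ultimately show ?thesis unfolding integral_over_def using dp p(1) by metis
  qed
  then obtain m where m: "uu ^ m * sig x \<in> DD" using AA_to_D[OF L3] by blast
  have "sig (uu ^ m * sig x) = (1 - uu) ^ m * x" by (simp add: sig_mult sig_power sig_uu sig_sig)
  then have "(1 - uu) ^ m * x \<in> DD" using sig_D[OF m] by simp
  then show "x \<in> DD" using G[OF Sadd Smult n] by blast
qed

theorem theorem2p3:
  shows "Dedekind_subring minimal_Dress_ring"
  unfolding Dedekind_subring_def using RR_noeth RR_int_closed RR_prime_max by blast


end
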